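(* Let $0<q<1$ and define the positive measure $\mu$ on $\mathbb C$ by $$\int_{\mathbb C} f\,d\mu=\sum_{k=0}^\infty\frac{q^k}{(q;q)_k}\,\frac{1}{2\pi}\int_0^{2\pi}f\big(q^{k/2}e^{i\theta}\big)\,d\theta .$$ Then for all $m,n,s,t\in\mathbb N_0$, $$\int_{\mathbb C}H_{m,n}(z,\bar z|q)\,\overline{H_{s,t}(z,\bar z|q)}\,d\mu(z)=\frac{q^{mn}(q;q)_m(q;q)_n}{(q;q)_\infty}\,\delta_{m,s}\delta_{n,t}.$$
   Context: $(a;q)_n=\prod_{j=0}^{n-1}(1-aq^j)$, $(a;q)_\infty=\prod_{j\ge0}(1-aq^j)$, $\left[{m\atop k}\right]_q=\frac{(q;q)_m}{(q;q)_k(q;q)_{m-k}}$, $m\wedge n=\min\{m,n\}$. The first $q$-$2D$-Hermite polynomials are $$H_{m,n}(z_1,z_2|q)=\sum_{k=0}^{m\wedge n}\left[{m\atop k}\right]_q\left[{n\atop k}\right]_q(-1)^kq^{\binom k2}(q;q)_k\,z_1^{m-k}z_2^{n-k},$$ and $H_{m,n}(z,\bar z|q)$ denotes this polynomial evaluated at $z_1=z$, $z_2=\bar z$. *)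

theory Defs
  imports "HOL-Analysis.Analysis"
begin

definition qpoch :: "'a::real_normed_field \<Rightarrow> 'a \<Rightarrow> nat \<Rightarrow> 'a" where
  "qpoch a q n = (\<Prod>j<n. 1 - a * q ^ j)"

definition qpoch_inf :: "real \<Rightarrow> real \<Rightarrow> real" where
  "qpoch_inf a q = (\<Prod>j. 1 - a * q ^ j)"

definition qbinom :: "real \<Rightarrow> nat \<Rightarrow> nat \<Rightarrow> real" where
  "qbinom q m k = qpoch q q m / (qpoch q q k * qpoch q q (m - k))"

definition qHermite2D :: "nat \<Rightarrow> nat \<Rightarrow> complex \<Rightarrow> complex \<Rightarrow> real \<Rightarrow> complex" where
  "qHermite2D m n z1 z2 q =
     (\<Sum>k\<le>min m n. of_real (qbinom q m k * qbinom q n k * (-1) ^ k * q ^ (k choose 2)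
        * qpoch q q k) * z1 ^ (m - k) * z2 ^ (n - k))"

text \<open>The k-th term of the integral of f against the measure mu:
  q^k/(q;q)_k * (1/(2 pi)) * int_0^{2 pi} f(q^{k/2} e^{i theta}) d theta.\<close>
definition mu_term :: "real \<Rightarrow> (complex \<Rightarrow> complex) \<Rightarrow> nat \<Rightarrow> complex" where
  "mu_term q f k = of_real (q ^ k / qpoch q q k) *
     (integral {0..2*pi} (\<lambda>\<theta>. f (of_real (q powr (real k / 2)) * cis \<theta>)) / (2 * pi))"

end

theory Submission
  imports Defs
begin

lemma qp_Suc: "qpoch q q (Suc n) = qpoch q q n * (1 - q^Suc n)" by (simp add: qpoch_def)
lemma qp_0[simp]: "qpoch q q 0 = 1" by (simp add: qpoch_def)

lemma qp_pos: assumes "0 < (q::real)" "q < 1" shows "qpoch q q n > 0"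
proof (induction n)
  case (Suc n)
  have "q^Suc n < 1" using assms by (rule power_Suc_less_one)
  then show ?case using Suc by (simp add: qp_Suc)
qed simp

lemma qp_le1: assumes "0 < (q::real)" "q < 1" shows "qpoch q q n \<le> 1"
proof (induction n)
  case (Suc n)
  have "q^Suc n < 1" using assms by (rule power_Suc_less_one)
  moreover have "0 \<le> q^Suc n" using assms by simp
  ultimately show ?case using Suc qp_pos[OF assms, of n] by (simp add: qp_Suc mult_le_one)
qed simp

lemma euler_summable0: assumes q: "0 < (q::real)" "q < 1"
  shows "summable (\<lambda>j. q^j / qpoch q q j)"
proof -
  define c where "c = (1 + q) / 2"
  have c: "c < 1" "q < c" using q by (auto simp: c_def)
  have "(\<lambda>j. q^Suc j) \<longlonglongrightarrow> 0"
    using LIMSEQ_power_zero[of q] q by (simp add: LIMSEQ_Suc)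
  moreover have "0 < 1 - q / c" using c q by (simp add: field_simps)
  ultimately have "eventually (\<lambda>j. q^Suc j < 1 - q / c) sequentially"
    by (rule order_tendstoD(2))
  then obtain N where N: "\<And>j. j \<ge> N \<Longrightarrow> q^Suc j < 1 - q / c"
    by (auto simp: eventually_sequentially)
  show ?thesis
  proof (rule summable_ratio_test[OF c(1), of N])
    fix j assume "j \<ge> N"
    then have h: "q^Suc j < 1 - q/c" by (rule N)
    have p: "qpoch q q j > 0" "qpoch q q (Suc j) > 0" using qp_pos[OF q] by auto
    have cpos: "c > 0" using c q by simp
    have "q \<le> c * (1 - q^Suc j)" using h cpos by (simp add: field_simps)
    have lt: "q^Suc j < 1" using q by (rule power_Suc_less_one)
    then have "q / (1 - q^Suc j) \<le> c" using \<open>q \<le> c * (1 - q^Suc j)\<close>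
      by (simp add: divide_le_eq)
    then have "(q^j / qpoch q q j) * (q / (1 - q^Suc j)) \<le> (q^j / qpoch q q j) * c"
      using p q by (intro mult_left_mono) auto
    moreover have "(q^j / qpoch q q j) * (q / (1 - q^Suc j)) = q^Suc j / qpoch q q (Suc j)"
      using lt by (simp add: qp_Suc field_simps)
    ultimately have "q^Suc j / qpoch q q (Suc j) \<le> c * (q^j / qpoch q q j)"
      by (metis mult.commute)
    then show "norm (q^Suc j / qpoch q q (Suc j)) \<le> c * norm (q^j / qpoch q q j)"
      using p q by simp
  qed
qed

lemma euler_summable: assumes q: "0 < (q::real)" "q < 1"
  shows "summable (\<lambda>j. (q^Suc a)^j / qpoch q q j)"
proof (rule summable_comparison_test'[OF euler_summable0[OF q]])
  fix j :: nat
  have p: "qpoch q q j > 0" using qp_pos[OF q] by auto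
  have "(q^Suc a)^j \<le> q^j" unfolding power_mult[symmetric]
    using q by (intro power_decreasing) auto
  then show "norm ((q^Suc a)^j / qpoch q q j) \<le> q^j / qpoch q q j"
    using p q by (simp add: divide_right_mono)
qed

definition ES :: "real \<Rightarrow> nat \<Rightarrow> real" where
  "ES q a = (\<Sum>j. (q^Suc a)^j / qpoch q q j)"

lemma ES_Suc: assumes q: "0 < (q::real)" "q < 1"
  shows "ES q (Suc a) = (1 - q^Suc a) * ES q a"
proof -
  define x where "x = q^Suc a"
  define g where "g j = x^j / qpoch q q j" for j
  define h where "h j = (x*q)^j / qpoch q q j" for j
  have xq: "x * q = q^Suc (Suc a)" by (simp add: x_def)
  have g: "g sums ES q a" unfolding g_def ES_def x_def
    using euler_summable[OF q] by (simp add: summable_sums)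
  have h: "h sums ES q (Suc a)" unfolding h_def ES_def xq
    by (rule summable_sums[OF euler_summable[OF q]])
  have d: "(\<lambda>j. g j - h j) sums (ES q a - ES q (Suc a))" using sums_diff[OF g h] .
  have ds: "g (Suc i) - h (Suc i) = x * g i" for i
  proof -
    have lt: "q^Suc i < 1" using q by (rule power_Suc_less_one)
    have p: "qpoch q q i > 0" using qp_pos[OF q] by auto
    have "g (Suc i) - h (Suc i) = (x^Suc i - (x*q)^Suc i) / qpoch q q (Suc i)"
      unfolding g_def h_def by (simp add: diff_divide_distrib)
    also have "\<dots> = x^Suc i * (1 - q^Suc i) / (qpoch q q i * (1 - q^Suc i))"
      unfolding qp_Suc by (simp only: power_mult_distrib right_diff_distrib mult_1_right)
    also have "\<dots> = x * g i" using lt p unfolding g_def by (simp add: field_simps)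
    finally show ?thesis .
  qed
  have "(\<lambda>i. g (Suc i) - h (Suc i)) sums (x * ES q a)"
    unfolding ds by (rule sums_mult[OF g])
  then have "(\<lambda>j. g j - h j) sums (x * ES q a + (g 0 - h 0))"
    by (subst (asm) sums_Suc_iff)
  then have "(\<lambda>j. g j - h j) sums (x * ES q a)" by (simp add: g_def h_def)
  with d have "ES q a - ES q (Suc a) = x * ES q a" by (rule sums_unique2)
  then show ?thesis by (simp add: x_def algebra_simps)
qed

lemma ES_eq: assumes q: "0 < (q::real)" "q < 1"
  shows "ES q a = qpoch q q a * ES q 0"
  by (induction a) (simp_all add: ES_Suc[OF q] qp_Suc)

lemma ES_bounds: assumes q: "0 < (q::real)" "q < 1"
  shows "1 \<le> ES q a" "ES q a \<le> 1 + q^a * ES q 0"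
proof -
  define g where "g a j = (q^Suc a)^j / qpoch q q j" for a j
  have gs: "g a sums ES q a" for a unfolding g_def ES_def
    using euler_summable[OF q] by (simp add: summable_sums)
  have gnn: "g a j \<ge> 0" for a j using qp_pos[OF q, of j] q unfolding g_def by simp
  have gsuc: "(\<lambda>j. g a (Suc j)) sums (ES q a - 1)" for a
    using gs[of a] by (subst sums_Suc_iff) (simp add: g_def)
  have le: "g a (Suc j) \<le> q^a * g 0 (Suc j)" for j
  proof -
    have "(q^Suc a)^Suc j \<le> q^(a + Suc j)" unfolding power_mult[symmetric]
      using q by (intro power_decreasing) auto
    then have "(q^Suc a)^Suc j / qpoch q q (Suc j) \<le> q^(a + Suc j) / qpoch q q (Suc j)"
      using qp_pos[OF q, of "Suc j"] by (intro divide_right_mono) auto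
    then show ?thesis unfolding g_def by (simp add: power_add mult_ac)
  qed
  have "ES q a - 1 \<ge> 0" using sums_le[OF _ sums_zero gsuc[of a]] gnn by auto
  then show "1 \<le> ES q a" by simp
  have "ES q a - 1 \<le> q^a * (ES q 0 - 1)"
    by (rule sums_le[OF le gsuc[of a] sums_mult[OF gsuc[of 0]]])
  moreover have "q^a * (ES q 0 - 1) \<le> q^a * ES q 0" using q by (intro mult_left_mono) auto
  ultimately show "ES q a \<le> 1 + q^a * ES q 0" by linarith
qed

lemma euler_main: assumes q: "0 < (q::real)" "q < 1"
  shows "(\<lambda>j. (q^Suc a)^j / qpoch q q j) sums (qpoch q q a / qpoch_inf q q)"
proof -
  have E0: "ES q 0 \<ge> 1" using ES_bounds[OF q] by simp
  have "(\<lambda>a. 1 + q^a * ES q 0) \<longlonglongrightarrow> 1 + 0 * ES q 0"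
    using q by (intro tendsto_intros LIMSEQ_power_zero) auto
  then have up: "(\<lambda>a. 1 + q^a * ES q 0) \<longlonglongrightarrow> 1" by simp
  have "(\<lambda>a. ES q a) \<longlonglongrightarrow> 1"
  proof (rule tendsto_sandwich[of "\<lambda>_. 1" _ _ "\<lambda>a. 1 + q^a * ES q 0"])
    show "eventually (\<lambda>a. 1 \<le> ES q a) sequentially" using ES_bounds(1)[OF q] by simp
    show "eventually (\<lambda>a. ES q a \<le> 1 + q^a*ES q 0) sequentially" using ES_bounds(2)[OF q] by simp
  qed (auto intro: up)
  then have "(\<lambda>a. ES q a / ES q 0) \<longlonglongrightarrow> 1 / ES q 0"
    by (rule tendsto_divide) (use E0 in auto)
  moreover have "ES q n / ES q 0 = (\<Prod>j<n. 1 - q * q^j)" for n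
    using ES_eq[OF q, of n] E0 by (simp add: qpoch_def)
  ultimately have lim: "(\<lambda>n. \<Prod>j<n. 1 - q * q^j) \<longlonglongrightarrow> 1 / ES q 0" by simp
  have "qpoch_inf q q = 1 / ES q 0" unfolding qpoch_inf_def
    using prodinf_eq_prod_lim'[OF lim] E0 by simp
  then have "ES q a = qpoch q q a / qpoch_inf q q" using ES_eq[OF q, of a] by simp
  moreover have "(\<lambda>j. (q^Suc a)^j / qpoch q q j) sums ES q a"
    unfolding ES_def by (rule summable_sums[OF euler_summable[OF q]])
  ultimately show ?thesis by simp
qed


definition cf :: "real \<Rightarrow> nat \<Rightarrow> nat \<Rightarrow> nat \<Rightarrow> real" where
  "cf q m n k = (if k \<le> m \<and> k \<le> n then (-1)^k * q^(k choose 2) * qpoch q q m * qpoch q q n /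
      (qpoch q q k * qpoch q q (m-k) * qpoch q q (n-k)) else 0)"

definition II :: "real \<Rightarrow> nat \<Rightarrow> nat \<Rightarrow> nat \<Rightarrow> real" where
  "II q m n a = (\<Sum>k\<le>n. cf q m n k * qpoch q q (n + a - k))"

definition QQ :: "real \<Rightarrow> nat \<Rightarrow> nat \<Rightarrow> real" where
  "QQ q a m = (\<Prod>i<m. 1 - q^(a-i))"

lemma cf_0[simp]: assumes q: "0 < (q::real)" "q < 1" shows "cf q m n 0 = 1"
  using qp_pos[OF q, of m] qp_pos[OF q, of n] by (simp add: cf_def numeral_2_eq_2)

lemma cf_rec_generic:
  assumes q: "0 < (q::real)" "q < 1"
  shows "cf q (Suc (Suc j + u)) (Suc (j + v)) (Suc j) =
         cf q (Suc j + u) (Suc (j + v)) (Suc j) - q^(Suc j + u) * (1 - q^Suc (j+v)) * cf q (Suc j + u) (j+v) j"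
proof -
  define X where "X = q^j"
  define U where "U = q^u"
  have X: "X > 0" "q*X < 1" using q by (auto simp: X_def intro: power_Suc_less_one[simplified])
  have U: "U > 0" "q*U < 1" using q by (auto simp: U_def intro: power_Suc_less_one[simplified])
  have p: "qpoch q q j > 0" "qpoch q q u > 0" "qpoch q q v > 0" "qpoch q q (j+u) > 0"
     "qpoch q q (j+v) > 0" using qp_pos[OF q] by auto
  have c: "Suc j choose 2 = (j choose 2) + j" by (simp add: numeral_2_eq_2)
  have e1: "Suc (Suc j + u) - Suc j = Suc u" "Suc j + u - Suc j = u" "Suc (j+v) - Suc j = v"
     "j + v - j = v" "Suc j + u - j = Suc u" by auto
  have pw: "q^(j+u) = X*U" "q^(Suc j + u) = q*X*U" "q^Suc (Suc j + u) = q*q*X*U" "q^Suc j = q * X" "q^Suc u = q*U"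
    by (simp_all add: X_def U_def power_add)
  have d1: "1 - q*X \<noteq> 0" "1 - q*U \<noteq> 0" using X U by auto
  show ?thesis unfolding cf_def e1 using d1 p
    apply (simp add: c power_add qp_Suc pw del: power_Suc)
    apply (simp add: pw[unfolded power_Suc] X_def[symmetric] U_def[symmetric] divide_simps)
    apply (simp add: algebra_simps)
    done
qed

lemma cf_rec_boundary:
  assumes q: "0 < (q::real)" "q < 1"
  shows "cf q (Suc m) (Suc (m + v)) (Suc m) =
         0 - q^m * (1 - q^Suc (m+v)) * cf q m (m+v) m"
proof -
  have p: "qpoch q q m > 0" "qpoch q q v > 0" "qpoch q q (Suc m) > 0" "qpoch q q (m+v) > 0"
    using qp_pos[OF q] by auto
  have c: "Suc m choose 2 = (m choose 2) + m" by (simp add: numeral_2_eq_2)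
  have e: "Suc (m+v) - Suc m = v" "m + v - m = v" by auto
  show ?thesis unfolding cf_def e using p
    by (simp add: c power_add qp_Suc[of q "m+v"] field_simps)
qed

lemma cf_rec:
  assumes q: "0 < (q::real)" "q < 1"
  shows "cf q (Suc m) n k = cf q m n k - (if k = 0 then 0 else q^m * (1 - q^n) * cf q m (n-1) (k-1))"
proof (cases k)
  case 0 then show ?thesis using q by simp
next
  case (Suc j)
  show ?thesis
  proof (cases n)
    case 0 then show ?thesis using Suc by (simp add: cf_def)
  next
    case (Suc n')
    show ?thesis
    proof (cases "j < m \<and> j \<le> n'")
      case True
      then obtain u v where uv: "m = Suc j + u" "n' = j + v"
        by (metis add_Suc le_Suc_ex less_eq_Suc_le le_add_diff_inverse)
      show ?thesis using cf_rec_generic[OF q, of j u v] unfolding \<open>k = Suc j\<close> Suc uv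
        by simp
    next
      case False
      show ?thesis
      proof (cases "j = m \<and> m \<le> n'")
        case True
        then obtain v where v: "n' = m + v" using le_Suc_ex by blast
        have "cf q m (Suc (m+v)) (Suc m) = 0" by (simp add: cf_def)
        then show ?thesis using cf_rec_boundary[OF q, of m v] True unfolding \<open>k = Suc j\<close> Suc v
          by simp
      next
        case False2: False
        then show ?thesis using False unfolding \<open>k = Suc j\<close> Suc
          by (auto simp: cf_def)
      qed
    qed
  qed
qed

lemma II_rec:
  assumes q: "0 < (q::real)" "q < 1"
  shows "II q (Suc m) n a = II q m n a - q^m * (1 - q^n) * II q m (n-1) a"
proof (cases n)
  case 0 then show ?thesis using q by (simp add: II_def)
next
  case (Suc n')
  have "II q (Suc m) n a = II q m n a - (\<Sum>k\<le>Suc n'. (if k = 0 then 0 else q^m * (1 - q^n) * cf q m (n-1) (k-1)) * qpoch q q (n + a - k))"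
    unfolding II_def cf_rec[OF q] by (simp add: left_diff_distrib sum_subtractf Suc)
  also have "(\<Sum>k\<le>Suc n'. (if k = 0 then 0 else q^m * (1 - q^n) * cf q m (n-1) (k-1)) * qpoch q q (n + a - k))
     = (\<Sum>k\<le>n'. q^m * (1 - q^n) * cf q m n' k * qpoch q q (n' + a - k))"
    by (subst sum.atMost_Suc_shift) (simp add: Suc)
  also have "\<dots> = q^m * (1 - q^n) * II q m (n-1) a"
    by (simp add: II_def sum_distrib_left Suc mult.assoc)
  finally show ?thesis .
qed

lemma QQ_Suc: "QQ q a (Suc m) = QQ q a m * (1 - q^(a-m))" by (simp add: QQ_def)

lemma QQ_zero: "a < m \<Longrightarrow> QQ q a m = 0"
  unfolding QQ_def by (intro prod_zero) (auto intro!: bexI[of _ a])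

lemma QQ_diag: "QQ q m m = qpoch q q m"
proof -
  have "QQ q m m = (\<Prod>i<m. (\<lambda>j. 1 - q^Suc j) (m - Suc i))"
    unfolding QQ_def by (intro prod.cong) (auto simp: Suc_diff_Suc)
  also have "\<dots> = (\<Prod>j<m. 1 - q^Suc j)" by (rule prod.nat_diff_reindex)
  finally show ?thesis by (simp add: qpoch_def)
qed

lemma II_closed:
  assumes q: "0 < (q::real)" "q < 1"
  shows "m \<le> n + a \<Longrightarrow> II q m n a = q^(m*n) * QQ q a m * qpoch q q (n + a - m)"
proof (induction m arbitrary: n)
  case 0
  have "II q 0 n a = (\<Sum>k\<le>n. (if k = 0 then qpoch q q (n+a) else 0))"
    unfolding II_def using q qp_pos[OF q, of n] by (intro sum.cong) (auto simp: cf_def numeral_2_eq_2)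
  then show ?case by (simp add: QQ_def)
next
  case (Suc m)
  show ?case
  proof (cases "a < Suc m")
    case True
    then have z: "QQ q a (Suc m) = 0" by (rule QQ_zero)
    show ?thesis
    proof (cases "a < m")
      case True
      then show ?thesis using Suc by (simp add: II_rec[OF q] QQ_zero z)
    next
      case False
      with True have am: "a = m" by simp
      then obtain n' where n: "n = Suc n'" using Suc.prems by (cases n) auto
      have d: "n + a - m = Suc (n' + a - m)" "n - 1 + a - m = n' + a - m" using am n by auto
      have ih: "II q m (n-1) a = q^(m*(n-1)) * QQ q a m * qpoch q q (n - 1 + a - m)"
        using Suc.IH[of "n-1"] am n by simp
      show ?thesis unfolding z II_rec[OF q] Suc.IH[OF Suc.prems[THEN Suc_leD]] ih
        using Suc.prems d
        by (simp add: qp_Suc am n power_add algebra_simps)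
    qed
  next
    case False
    then have am: "m < a" by simp
    show ?thesis
    proof (cases n)
      case 0
      have d: "a - m = Suc (a - Suc m)" using am by simp
      show ?thesis unfolding II_rec[OF q] Suc.IH[OF Suc.prems[THEN Suc_leD]] using 0 d
        by (simp add: QQ_Suc qp_Suc)
    next
      case (Suc n')
      have d: "n + a - m = Suc (n' + a - m)" "n - 1 + a - m = n' + a - m"
        "n + a - Suc m = n' + a - m" using am Suc by auto
      have e: "q^Suc (n' + a - m) = q^Suc n' * q^(a - m)"
        using am by (simp add: power_add[symmetric])
      have ih: "II q m (n-1) a = q^(m*(n-1)) * QQ q a m * qpoch q q (n - 1 + a - m)"
        using Suc.IH[of "n-1"] am Suc by simp
      have e2: "q^(a + n' - m) = q^n' * q^(a - m)"
        using am by (simp add: power_add[symmetric] add.commute)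
      show ?thesis unfolding II_rec[OF q] Suc.IH[OF Suc.prems[THEN Suc_leD]] ih
        using Suc.prems d
        by (simp add: qp_Suc QQ_Suc e e2 Suc power_add algebra_simps)
    qed
  qed
qed

definition TT :: "real \<Rightarrow> nat \<Rightarrow> nat \<Rightarrow> nat \<Rightarrow> nat \<Rightarrow> real" where
  "TT q m n s t = (\<Sum>k\<le>n. \<Sum>l\<le>t. cf q m n k * cf q s t l * qpoch q q (n + s - k - l))"

lemma TT_expand:
  assumes q: "0 < (q::real)" "q < 1" and e: "m + t = n + s"
  shows "TT q m n s t = (\<Sum>l\<le>t. cf q s t l * (q^(m*n) * QQ q (s-l) m * qpoch q q (t - l)))"
proof -
  have "TT q m n s t = (\<Sum>l\<le>t. \<Sum>k\<le>n. cf q m n k * cf q s t l * qpoch q q (n + s - k - l))"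
    unfolding TT_def by (rule sum.swap)
  also have "\<dots> = (\<Sum>l\<le>t. cf q s t l * (q^(m*n) * QQ q (s-l) m * qpoch q q (t - l)))"
  proof (rule sum.cong[OF refl])
    fix l assume l: "l \<in> {..t}"
    show "(\<Sum>k\<le>n. cf q m n k * cf q s t l * qpoch q q (n + s - k - l)) =
          cf q s t l * (q^(m*n) * QQ q (s-l) m * qpoch q q (t - l))"
    proof (cases "l \<le> s")
      case True
      have "(\<Sum>k\<le>n. cf q m n k * cf q s t l * qpoch q q (n + s - k - l)) = cf q s t l * II q m n (s - l)"
        unfolding II_def sum_distrib_left using True
        by (intro sum.cong refl) (simp add: algebra_simps)
      also have "II q m n (s - l) = q^(m*n) * QQ q (s-l) m * qpoch q q (t - l)"
      proof -
        have "m \<le> n + (s - l)" "n + (s - l) - m = t - l" using True l e by auto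
        then show ?thesis using II_closed[OF q] by simp
      qed
      finally show ?thesis .
    next
      case False
      then have "cf q s t l = 0" by (simp add: cf_def)
      then show ?thesis by simp
    qed
  qed
  finally show ?thesis .
qed

lemma TT_lt:
  assumes q: "0 < (q::real)" "q < 1" and e: "m + t = n + s" and sm: "s < m"
  shows "TT q m n s t = 0"
  unfolding TT_expand[OF q e] using sm by (simp add: QQ_zero)

lemma TT_diag:
  assumes q: "0 < (q::real)" "q < 1"
  shows "TT q m n m n = q^(m*n) * qpoch q q m * qpoch q q n"
proof -
  have "TT q m n m n = (\<Sum>l\<le>n. if l = 0 then q^(m*n) * qpoch q q m * qpoch q q n else 0)"
    unfolding TT_expand[OF q add.commute]
  proof (rule sum.cong[OF refl])
    fix l assume "l \<in> {..n}"
    show "cf q m n l * (q^(m*n) * QQ q (m-l) m * qpoch q q (n - l)) =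
       (if l = 0 then q^(m*n) * qpoch q q m * qpoch q q n else 0)"
    proof (cases "l = 0")
      case True then show ?thesis using q by (simp add: QQ_diag)
    next
      case False
      show ?thesis
      proof (cases "l \<le> m")
        case True then show ?thesis using False by (simp add: QQ_zero)
      next
        case False then show ?thesis by (simp add: cf_def)
      qed
    qed
  qed
  then show ?thesis by simp
qed

lemma TT_sym:
  assumes e: "m + t = n + s"
  shows "TT q m n s t = TT q s t m n"
  unfolding TT_def
  apply (subst sum.swap)
  apply (intro sum.cong refl)
  using e by (simp add: mult.commute add.commute[of t m] add.commute[of _ "_::nat"])

lemma TT_main:
  assumes q: "0 < (q::real)" "q < 1" and e: "m + t = n + s"
  shows "TT q m n s t = (if m = s \<and> n = t then q^(m*n) * qpoch q q m * qpoch q q n else 0)"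
proof -
  consider "s < m" | "s = m" | "m < s" by linarith
  then show ?thesis
  proof cases
    case 1 then show ?thesis using TT_lt[OF q e] by simp
  next
    case 2 then have "t = n" using e by simp
    then show ?thesis using 2 TT_diag[OF q] by simp
  next
    case 3
    have "TT q s t m n = 0" using TT_lt[OF q _ 3] e by simp
    then show ?thesis using TT_sym[OF e] 3 by simp
  qed
qed


lemma cis_deriv: "((\<lambda>\<theta>. cis (d * \<theta>)) has_vector_derivative (\<i> * of_real d * cis (d * x))) (at x within A)"
proof -
  have "((\<lambda>\<theta>. cis (d * \<theta>)) has_derivative (\<lambda>t. (d * t) *\<^sub>R (\<i> * cis (d * x)))) (at x within A)"
    by (intro has_derivative_cis derivative_intros)
  then show ?thesis unfolding has_vector_derivative_def
    by (simp add: scaleR_conv_of_real mult_ac)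
qed

lemma cis_integral_nz:
  fixes D :: int assumes "D \<noteq> 0"
  shows "((\<lambda>\<theta>. cis (of_int D * \<theta>)) has_integral 0) {0..2*pi}"
proof -
  define c where "c = \<i> * of_real (of_int D)"
  have c: "c \<noteq> 0" using assms by (simp add: c_def)
  have "((\<lambda>\<theta>. cis (of_int D * \<theta>)) has_integral (cis (of_int D * (2*pi)) / c - cis (of_int D * 0) / c)) {0..2*pi}"
  proof (rule fundamental_theorem_of_calculus)
    fix x :: real assume "x \<in> {0..2*pi}"
    have "((\<lambda>\<theta>. cis (of_int D * \<theta>)) has_vector_derivative (c * cis (of_int D * x))) (at x within {0..2*pi})"
      using cis_deriv[of "of_int D" x "{0..2*pi}"] by (simp add: c_def)
    then have "((\<lambda>\<theta>. cis (of_int D * \<theta>) / c) has_vector_derivative (c * cis (of_int D * x) / c)) (at x within {0..2*pi})"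
      by (rule has_vector_derivative_divide)
    then show "((\<lambda>\<theta>. cis (of_int D * \<theta>) / c) has_vector_derivative cis (of_int D * x)) (at x within {0..2*pi})"
      using c by simp
  qed simp
  moreover have "cis (of_int D * (2*pi)) = 1"
    using cis_multiple_2pi[of "of_int D"] by (simp add: mult_ac)
  ultimately show ?thesis by simp
qed

lemma cis_integral:
  fixes D :: int and c :: complex
  shows "integral {0..2*pi} (\<lambda>\<theta>. cis (of_int D * \<theta>) * c) = (if D = 0 then 2 * pi * c else 0)"
proof (cases "D = 0")
  case True then show ?thesis by (simp add: scaleR_conv_of_real)
next
  case False
  then show ?thesis using integral_mult_left[of "{0..2*pi}" "\<lambda>\<theta>. cis (of_int D * \<theta>)" c]
    cis_integral_nz[OF False] by (simp add: integral_unique)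
qed

lemma hcoef:
  assumes q: "0 < (q::real)" "q < 1" and k: "k \<le> m" "k \<le> n"
  shows "qbinom q m k * qbinom q n k * (-1)^k * q^(k choose 2) * qpoch q q k = cf q m n k"
  using k qp_pos[OF q, of k] qp_pos[OF q, of "m-k"] qp_pos[OF q, of "n-k"]
  by (simp add: qbinom_def cf_def field_simps)

definition PP :: "real \<Rightarrow> nat \<Rightarrow> nat \<Rightarrow> real \<Rightarrow> real" where
  "PP q m n r = (\<Sum>k\<le>n. cf q m n k * r^(m-k) * r^(n-k))"

lemma H_eval:
  assumes q: "0 < (q::real)" "q < 1"
  shows "qHermite2D m n (of_real r * cis \<theta>) (cnj (of_real r * cis \<theta>)) q =
         cis ((real m - real n) * \<theta>) * of_real (PP q m n r)"
proof -
  have "qHermite2D m n (of_real r * cis \<theta>) (cnj (of_real r * cis \<theta>)) q =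
     (\<Sum>k\<le>min m n. cis ((real m - real n) * \<theta>) * of_real (cf q m n k * r^(m-k) * r^(n-k)))"
    unfolding qHermite2D_def
  proof (intro sum.cong refl)
    fix k assume "k \<in> {..min m n}"
    then have k: "k \<le> m" "k \<le> n" by auto
    have a: "real (m - k) * \<theta> + real (n - k) * (- \<theta>) = (real m - real n) * \<theta>"
      using k by (simp add: of_nat_diff algebra_simps)
    have "(of_real r * cis \<theta>) ^ (m - k) * (cnj (of_real r * cis \<theta>)) ^ (n - k) =
          of_real (r^(m-k) * r^(n-k)) * (cis (real (m - k) * \<theta>) * cis (real (n - k) * (- \<theta>)))"
    proof -
      have d1: "cis \<theta> ^ (m-k) = cis (real (m - k) * \<theta>)" by (rule Complex.DeMoivre)
      have d2: "cis (-\<theta>) ^ (n-k) = cis (real (n - k) * (-\<theta>))" by (rule Complex.DeMoivre)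
      show ?thesis
        by (simp only: power_mult_distrib complex_cnj_mult complex_cnj_complex_of_real cis_cnj d1 d2 of_real_mult of_real_power mult_ac)
    qed
    also have "\<dots> = of_real (r^(m-k) * r^(n-k)) * cis ((real m - real n) * \<theta>)"
      by (simp only: cis_mult a)
    finally show "complex_of_real (qbinom q m k * qbinom q n k * (- 1) ^ k * q ^ (k choose 2) * qpoch q q k) *
        (of_real r * cis \<theta>) ^ (m - k) * cnj (of_real r * cis \<theta>) ^ (n - k) =
        cis ((real m - real n) * \<theta>) * of_real (cf q m n k * r ^ (m - k) * r ^ (n - k))"
      unfolding hcoef[OF q k] by (simp add: mult_ac)
  qed
  also have "\<dots> = cis ((real m - real n) * \<theta>) * of_real (\<Sum>k\<le>min m n. cf q m n k * r^(m-k) * r^(n-k))"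
    by (simp add: sum_distrib_left)
  also have "(\<Sum>k\<le>min m n. cf q m n k * r^(m-k) * r^(n-k)) = PP q m n r"
    unfolding PP_def by (intro sum.mono_neutral_left) (auto simp: cf_def)
  finally show ?thesis .
qed

lemma f_eval:
  assumes q: "0 < (q::real)" "q < 1"
  shows "(\<lambda>z. qHermite2D m n z (cnj z) q * cnj (qHermite2D s t z (cnj z) q)) (of_real r * cis \<theta>) =
    cis (of_int (int m - int n - int s + int t) * \<theta>) * of_real (PP q m n r * PP q s t r)"
proof -
  have "cis ((real m - real n) * \<theta>) * cis (- ((real s - real t) * \<theta>)) = cis (of_int (int m - int n - int s + int t) * \<theta>)"
    by (simp add: cis_mult algebra_simps)
  then show ?thesis unfolding H_eval[OF q] by (simp add: cis_cnj mult_ac)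
qed

lemma mu_eval:
  assumes q: "0 < (q::real)" "q < 1"
  shows "mu_term q (\<lambda>z. qHermite2D m n z (cnj z) q * cnj (qHermite2D s t z (cnj z) q)) j =
    of_real (if int m - int n - int s + int t = 0 then
       q^j / qpoch q q j * (PP q m n (q powr (real j / 2)) * PP q s t (q powr (real j / 2))) else 0)"
proof -
  define D where "D = int m - int n - int s + int t"
  define r where "r = q powr (real j / 2)"
  have I: "integral {0..2*pi} (\<lambda>\<theta>. (\<lambda>z. qHermite2D m n z (cnj z) q * cnj (qHermite2D s t z (cnj z) q)) (of_real r * cis \<theta>))
      = integral {0..2*pi} (\<lambda>\<theta>. cis (of_int D * \<theta>) * of_real (PP q m n r * PP q s t r))"
    unfolding f_eval[OF q] D_def ..
  show ?thesis unfolding mu_term_def r_def[symmetric] I D_def[symmetric]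
    using cis_integral[of D "complex_of_real (PP q m n r * PP q s t r)"]
    by simp
qed

lemma RR_expand:
  assumes q: "0 < (q::real)" "q < 1" and e: "m + t = n + s"
  shows "q^j / qpoch q q j * (PP q m n (q powr (real j / 2)) * PP q s t (q powr (real j / 2))) =
    (\<Sum>k\<le>n. \<Sum>l\<le>t. cf q m n k * cf q s t l * ((q^Suc (n + s - k - l))^j / qpoch q q j))"
proof -
  define r where "r = q powr (real j / 2)"
  have r2: "r^2 = q^j"
  proof -
    have "r^2 = q powr (real j / 2 + real j / 2)" unfolding r_def power2_eq_square powr_add ..
    also have "\<dots> = q^j" using q by (simp add: powr_realpow)
    finally show ?thesis .
  qed
  have "q^j / qpoch q q j * (PP q m n r * PP q s t r) =
     (\<Sum>k\<le>n. \<Sum>l\<le>t. q^j / qpoch q q j * (cf q m n k * r^(m-k) * r^(n-k) * (cf q s t l * r^(s-l) * r^(t-l))))"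
    unfolding PP_def sum_product by (simp add: sum_distrib_left)
  also have "\<dots> = (\<Sum>k\<le>n. \<Sum>l\<le>t. cf q m n k * cf q s t l * ((q^Suc (n + s - k - l))^j / qpoch q q j))"
  proof (intro sum.cong refl)
    fix k l assume kl: "k \<in> {..n}" "l \<in> {..t}"
    show "q^j / qpoch q q j * (cf q m n k * r^(m-k) * r^(n-k) * (cf q s t l * r^(s-l) * r^(t-l))) =
          cf q m n k * cf q s t l * ((q^Suc (n + s - k - l))^j / qpoch q q j)"
    proof (cases "k \<le> m \<and> l \<le> s")
      case True
      have ex: "(m-k) + (n-k) + ((s-l) + (t-l)) = 2 * (n + s - k - l)" using True kl e by auto
      have "r^(m-k) * r^(n-k) * (r^(s-l) * r^(t-l)) = r^(2 * (n + s - k - l))"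
        unfolding ex[symmetric] power_add ..
      also have "\<dots> = (q^j)^(n + s - k - l)" unfolding power_mult r2 ..
      finally have rr: "r^(m-k) * r^(n-k) * (r^(s-l) * r^(t-l)) = (q^j)^(n + s - k - l)" .
      have qq: "q^j * (q^j)^(n + s - k - l) = (q^Suc (n + s - k - l))^j"
        by (simp add: power_mult[symmetric] power_add[symmetric] algebra_simps)
      have "q^j / qpoch q q j * (cf q m n k * r^(m-k) * r^(n-k) * (cf q s t l * r^(s-l) * r^(t-l)))
          = cf q m n k * cf q s t l * (q^j * (r^(m-k) * r^(n-k) * (r^(s-l) * r^(t-l)))) / qpoch q q j"
        by (simp add: mult_ac)
      then show ?thesis unfolding rr qq by simp
    next
      case False
      then have "cf q m n k = 0 \<or> cf q s t l = 0" by (auto simp: cf_def)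
      then show ?thesis by auto
    qed
  qed
  finally show ?thesis unfolding r_def .
qed

theorem theorem3p3:
  fixes q :: real and m n s t :: nat
  assumes "0 < q" and "q < 1"
  shows "(mu_term q (\<lambda>z. qHermite2D m n z (cnj z) q * cnj (qHermite2D s t z (cnj z) q))) sums
           (of_real (q ^ (m * n) * qpoch q q m * qpoch q q n / qpoch_inf q q)
            * (if m = s \<and> n = t then 1 else 0))"
proof -
  note q = assms
  show ?thesis
  proof (cases "int m - int n - int s + int t = 0")
    case False
    then have ne: "\<not> (m = s \<and> n = t)" by auto
    have z: "(if m = s \<and> n = t then (1::complex) else 0) = 0" using ne by simp
    show ?thesis unfolding mu_eval[OF q] z using False by simp
  next
    case True
    then have e: "m + t = n + s" by simp
    have "(\<lambda>j. \<Sum>k\<le>n. \<Sum>l\<le>t. cf q m n k * cf q s t l * ((q^Suc (n + s - k - l))^j / qpoch q q j))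
       sums (\<Sum>k\<le>n. \<Sum>l\<le>t. cf q m n k * cf q s t l * (qpoch q q (n + s - k - l) / qpoch_inf q q))"
      by (intro sums_sum sums_mult euler_main[OF q])
    also have "(\<Sum>k\<le>n. \<Sum>l\<le>t. cf q m n k * cf q s t l * (qpoch q q (n + s - k - l) / qpoch_inf q q))
       = TT q m n s t / qpoch_inf q q"
      unfolding TT_def by (simp add: sum_divide_distrib)
    also have "\<dots> = (if m = s \<and> n = t then q ^ (m * n) * qpoch q q m * qpoch q q n / qpoch_inf q q else 0)"
      unfolding TT_main[OF q e] by simp
    finally have "(\<lambda>j. complex_of_real (\<Sum>k\<le>n. \<Sum>l\<le>t. cf q m n k * cf q s t l * ((q^Suc (n + s - k - l))^j / qpoch q q j)))
       sums complex_of_real (if m = s \<and> n = t then q ^ (m * n) * qpoch q q m * qpoch q q n / qpoch_inf q q else 0)"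
      by (subst sums_of_real_iff)
    then show ?thesis unfolding mu_eval[OF q] RR_expand[OF q e] using True
      by (simp add: if_distrib cong: if_cong)
  qed
qed

end
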